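(* Let $C$ be a category with a variance $(E,M)$ and let $D$ be a category. Let $G\colon E\rightarrow D$ and $H\colon M\rightarrow D$ be (covariant) functors which are compatible, meaning: $G$ and $H$ agree on objects, and $$H(f^m)\,G(f^e) = G(f_e)\,H(f_m)$$ for every morphism $f$ of $C$. Then there exists a unique functor $F\colon C\rightarrow D$ whose restriction to $E$ is $G$ and whose restriction to $M$ is $H$.
   Context: A strict factorization system on a category $C$ is a pair $(E,M)$ of subcategories of $C$, both containing all objects of $C$, such that every morphism $f$ of $C$ factors uniquely as $f=me$ with $e$ a morphism of $E$ and $m$ a morphism of $M$. A variance on $C$ is a pair $(E,M)$ such that both $(E,M)$ and $(M,E)$ are strict factorization systems on $C$. For a morphism $f\colon x\rightarrow y$ of $C$, write its unique factorizations as $f=f^m f^e$ with $f^e\colon x\rightarrow f_t$ in $E$ and $f^m\colon f_t\rightarrow y$ in $M$ (the terminating factorization), and $f=f_e f_m$ with $f_m\colon x\rightarrow f_s$ in $M$ and $f_e\colon f_s\rightarrow y$ in $E$ (the starting factorization). *)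

theory Defs
  imports Main
begin

text \<open>Categories given explicitly by a set of objects, a set of arrows,
domain, codomain, identities and composition (comp g f means g after f).\<close>

record ('o, 'a) cat =
  Obj  :: "'o set"
  Arr  :: "'a set"
  Dom  :: "'a \<Rightarrow> 'o"
  Cod  :: "'a \<Rightarrow> 'o"
  Idt  :: "'o \<Rightarrow> 'a"
  Comp :: "'a \<Rightarrow> 'a \<Rightarrow> 'a"

definition category :: "('o, 'a) cat \<Rightarrow> bool" where
  "category C \<longleftrightarrow>
     (\<forall>f\<in>Arr C. Dom C f \<in> Obj C \<and> Cod C f \<in> Obj C) \<and>
     (\<forall>x\<in>Obj C. Idt C x \<in> Arr C \<and> Dom C (Idt C x) = x \<and> Cod C (Idt C x) = x) \<and>
     (\<forall>f\<in>Arr C. \<forall>g\<in>Arr C. Cod C f = Dom C g \<longrightarrow>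
        Comp C g f \<in> Arr C \<and> Dom C (Comp C g f) = Dom C f \<and> Cod C (Comp C g f) = Cod C g) \<and>
     (\<forall>f\<in>Arr C. Comp C f (Idt C (Dom C f)) = f \<and> Comp C (Idt C (Cod C f)) f = f) \<and>
     (\<forall>f\<in>Arr C. \<forall>g\<in>Arr C. \<forall>h\<in>Arr C. Cod C f = Dom C g \<longrightarrow> Cod C g = Dom C h \<longrightarrow>
        Comp C h (Comp C g f) = Comp C (Comp C h g) f)"

definition wide_subcat :: "('o, 'a) cat \<Rightarrow> 'a set \<Rightarrow> bool" where
  "wide_subcat C S \<longleftrightarrow> S \<subseteq> Arr C \<and> (\<forall>x\<in>Obj C. Idt C x \<in> S) \<and>
     (\<forall>f\<in>S. \<forall>g\<in>S. Cod C f = Dom C g \<longrightarrow> Comp C g f \<in> S)"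

definition strict_fact_sys :: "('o, 'a) cat \<Rightarrow> 'a set \<Rightarrow> 'a set \<Rightarrow> bool" where
  "strict_fact_sys C E M \<longleftrightarrow> wide_subcat C E \<and> wide_subcat C M \<and>
     (\<forall>f\<in>Arr C. \<exists>!p. fst p \<in> E \<and> snd p \<in> M \<and> Cod C (fst p) = Dom C (snd p)
                        \<and> f = Comp C (snd p) (fst p))"

definition variance :: "('o, 'a) cat \<Rightarrow> 'a set \<Rightarrow> 'a set \<Rightarrow> bool" where
  "variance C E M \<longleftrightarrow> strict_fact_sys C E M \<and> strict_fact_sys C M E"

text \<open>Terminating factorization f = f^m f^e (f^e in E, f^m in M):
  tfact returns the pair (f^e, f^m).\<close>
definition tfact :: "('o, 'a) cat \<Rightarrow> 'a set \<Rightarrow> 'a set \<Rightarrow> 'a \<Rightarrow> 'a \<times> 'a" where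
  "tfact C E M f = (THE p. fst p \<in> E \<and> snd p \<in> M \<and> Cod C (fst p) = Dom C (snd p)
                        \<and> f = Comp C (snd p) (fst p))"

text \<open>Starting factorization f = f_e f_m (f_m in M, f_e in E):
  sfact returns the pair (f_m, f_e).\<close>
definition sfact :: "('o, 'a) cat \<Rightarrow> 'a set \<Rightarrow> 'a set \<Rightarrow> 'a \<Rightarrow> 'a \<times> 'a" where
  "sfact C E M f = (THE p. fst p \<in> M \<and> snd p \<in> E \<and> Cod C (fst p) = Dom C (snd p)
                        \<and> f = Comp C (snd p) (fst p))"

text \<open>A functor from the wide subcategory S of C (S = Arr C gives a functor C \<rightarrow> D),
  given by an object map Fo and an arrow map Fa.\<close>
definition functor_on ::
  "('o, 'a) cat \<Rightarrow> 'a set \<Rightarrow> ('p, 'b) cat \<Rightarrow> ('o \<Rightarrow> 'p) \<Rightarrow> ('a \<Rightarrow> 'b) \<Rightarrow> bool" where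
  "functor_on C S D Fo Fa \<longleftrightarrow>
     (\<forall>x\<in>Obj C. Fo x \<in> Obj D \<and> Fa (Idt C x) = Idt D (Fo x)) \<and>
     (\<forall>f\<in>S. Fa f \<in> Arr D \<and> Dom D (Fa f) = Fo (Dom C f) \<and> Cod D (Fa f) = Fo (Cod C f)) \<and>
     (\<forall>f\<in>S. \<forall>g\<in>S. Cod C f = Dom C g \<longrightarrow> Fa (Comp C g f) = Comp D (Fa g) (Fa f))"

end

theory Submission
  imports Defs
begin

lemma cat_dc: "category C \<Longrightarrow> f \<in> Arr C \<Longrightarrow> Dom C f \<in> Obj C \<and> Cod C f \<in> Obj C"
  unfolding category_def by blast
lemma cat_id: "category C \<Longrightarrow> x \<in> Obj C \<Longrightarrow> Idt C x \<in> Arr C \<and> Dom C (Idt C x) = x \<and> Cod C (Idt C x) = x"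
  unfolding category_def by blast
lemma cat_comp: "category C \<Longrightarrow> f \<in> Arr C \<Longrightarrow> g \<in> Arr C \<Longrightarrow> Cod C f = Dom C g \<Longrightarrow>
   Comp C g f \<in> Arr C \<and> Dom C (Comp C g f) = Dom C f \<and> Cod C (Comp C g f) = Cod C g"
  unfolding category_def by blast
lemma cat_idr: "category C \<Longrightarrow> f \<in> Arr C \<Longrightarrow> Comp C f (Idt C (Dom C f)) = f"
  unfolding category_def by blast
lemma cat_idl: "category C \<Longrightarrow> f \<in> Arr C \<Longrightarrow> Comp C (Idt C (Cod C f)) f = f"
  unfolding category_def by blast
lemma cat_assoc: "category C \<Longrightarrow> f \<in> Arr C \<Longrightarrow> g \<in> Arr C \<Longrightarrow> h \<in> Arr C \<Longrightarrow>
   Cod C f = Dom C g \<Longrightarrow> Cod C g = Dom C h \<Longrightarrow>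
   Comp C h (Comp C g f) = Comp C (Comp C h g) f"
  unfolding category_def by blast

lemma sfact_eq: "sfact C E M = tfact C M E"
  unfolding sfact_def tfact_def by (rule ext) simp

lemma tfact_prop:
  assumes "strict_fact_sys C E M" "f \<in> Arr C"
  shows "fst (tfact C E M f) \<in> E \<and> snd (tfact C E M f) \<in> M \<and>
     Cod C (fst (tfact C E M f)) = Dom C (snd (tfact C E M f)) \<and>
     f = Comp C (snd (tfact C E M f)) (fst (tfact C E M f))"
proof -
  from assms have "\<exists>!p. fst p \<in> E \<and> snd p \<in> M \<and> Cod C (fst p) = Dom C (snd p)
                        \<and> f = Comp C (snd p) (fst p)" unfolding strict_fact_sys_def by blast
  from theI'[OF this] show ?thesis unfolding tfact_def .
qed

lemma tfact_unique:
  assumes "strict_fact_sys C E M" "f \<in> Arr C" "e \<in> E" "m \<in> M" "Cod C e = Dom C m" "f = Comp C m e"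
  shows "tfact C E M f = (e, m)"
proof -
  from assms have "\<exists>!p. fst p \<in> E \<and> snd p \<in> M \<and> Cod C (fst p) = Dom C (snd p)
                        \<and> f = Comp C (snd p) (fst p)" unfolding strict_fact_sys_def by blast
  from the1_equality[OF this, of "(e,m)"] assms show ?thesis unfolding tfact_def by simp
qed

theorem mainTheorem1:
  fixes C :: "('o, 'a) cat" and D :: "('p, 'b) cat"
    and E M :: "'a set"
    and Go Ho :: "'o \<Rightarrow> 'p" and Ga Ha :: "'a \<Rightarrow> 'b"
  assumes "category C" and "category D"
    and "variance C E M"
    and "functor_on C E D Go Ga"
    and "functor_on C M D Ho Ha"
    and "\<forall>x\<in>Obj C. Go x = Ho x"
    and "\<forall>f\<in>Arr C.
           Comp D (Ha (snd (tfact C E M f))) (Ga (fst (tfact C E M f)))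
         = Comp D (Ga (snd (sfact C E M f))) (Ha (fst (sfact C E M f)))"
  shows "\<exists>Fo Fa. functor_on C (Arr C) D Fo Fa
            \<and> (\<forall>x\<in>Obj C. Fo x = Go x) \<and> (\<forall>f\<in>E. Fa f = Ga f)
            \<and> (\<forall>x\<in>Obj C. Fo x = Ho x) \<and> (\<forall>f\<in>M. Fa f = Ha f)
            \<and> (\<forall>Fo' Fa'. functor_on C (Arr C) D Fo' Fa'
                 \<and> (\<forall>x\<in>Obj C. Fo' x = Go x) \<and> (\<forall>f\<in>E. Fa' f = Ga f)
                 \<and> (\<forall>x\<in>Obj C. Fo' x = Ho x) \<and> (\<forall>f\<in>M. Fa' f = Ha f)
                 \<longrightarrow> (\<forall>x\<in>Obj C. Fo' x = Fo x) \<and> (\<forall>f\<in>Arr C. Fa' f = Fa f))"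
proof -
  note C = \<open>category C\<close> and D = \<open>category D\<close>
  have sEM: "strict_fact_sys C E M" and sME: "strict_fact_sys C M E"
    using assms(3) unfolding variance_def by auto
  have wE: "wide_subcat C E" and wM: "wide_subcat C M" using sEM unfolding strict_fact_sys_def by auto
  have EA: "E \<subseteq> Arr C" and MA: "M \<subseteq> Arr C" using wE wM unfolding wide_subcat_def by auto
  have Eid: "\<And>x. x \<in> Obj C \<Longrightarrow> Idt C x \<in> E" and Mid: "\<And>x. x \<in> Obj C \<Longrightarrow> Idt C x \<in> M"
    using wE wM unfolding wide_subcat_def by auto
  have Ecomp: "\<And>f g. f \<in> E \<Longrightarrow> g \<in> E \<Longrightarrow> Cod C f = Dom C g \<Longrightarrow> Comp C g f \<in> E"
    using wE unfolding wide_subcat_def by auto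
  have Mcomp: "\<And>f g. f \<in> M \<Longrightarrow> g \<in> M \<Longrightarrow> Cod C f = Dom C g \<Longrightarrow> Comp C g f \<in> M"
    using wM unfolding wide_subcat_def by auto
  have GoHo: "\<And>x. x \<in> Obj C \<Longrightarrow> Ho x = Go x" using assms(6) by auto
  have G1: "\<And>x. x \<in> Obj C \<Longrightarrow> Go x \<in> Obj D \<and> Ga (Idt C x) = Idt D (Go x)"
    and G2: "\<And>f. f \<in> E \<Longrightarrow> Ga f \<in> Arr D \<and> Dom D (Ga f) = Go (Dom C f) \<and> Cod D (Ga f) = Go (Cod C f)"
    and G3: "\<And>f g. f \<in> E \<Longrightarrow> g \<in> E \<Longrightarrow> Cod C f = Dom C g \<Longrightarrow> Ga (Comp C g f) = Comp D (Ga g) (Ga f)"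
    using assms(4) unfolding functor_on_def by auto
  have H1: "\<And>x. x \<in> Obj C \<Longrightarrow> Ha (Idt C x) = Idt D (Go x)"
    and H2: "\<And>f. f \<in> M \<Longrightarrow> Ha f \<in> Arr D \<and> Dom D (Ha f) = Go (Dom C f) \<and> Cod D (Ha f) = Go (Cod C f)"
    and H3: "\<And>f g. f \<in> M \<Longrightarrow> g \<in> M \<Longrightarrow> Cod C f = Dom C g \<Longrightarrow> Ha (Comp C g f) = Comp D (Ha g) (Ha f)"
  proof -
    have A: "\<forall>x\<in>Obj C. Ho x \<in> Obj D \<and> Ha (Idt C x) = Idt D (Ho x)"
      and B: "\<forall>f\<in>M. Ha f \<in> Arr D \<and> Dom D (Ha f) = Ho (Dom C f) \<and> Cod D (Ha f) = Ho (Cod C f)"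
      and CC: "\<forall>f\<in>M. \<forall>g\<in>M. Cod C f = Dom C g \<longrightarrow> Ha (Comp C g f) = Comp D (Ha g) (Ha f)"
      using assms(5) unfolding functor_on_def by auto
    show "\<And>x. x \<in> Obj C \<Longrightarrow> Ha (Idt C x) = Idt D (Go x)" using A GoHo by auto
    show "\<And>f. f \<in> M \<Longrightarrow> Ha f \<in> Arr D \<and> Dom D (Ha f) = Go (Dom C f) \<and> Cod D (Ha f) = Go (Cod C f)"
    proof -
      fix f assume f: "f \<in> M"
      hence "f \<in> Arr C" using MA by auto
      thus "?thesis f" using B f GoHo cat_dc[OF C] by auto
    qed
    show "\<And>f g. f \<in> M \<Longrightarrow> g \<in> M \<Longrightarrow> Cod C f = Dom C g \<Longrightarrow> Ha (Comp C g f) = Comp D (Ha g) (Ha f)"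
      using CC by auto
  qed
  define te where "te f = fst (tfact C E M f)" for f
  define tm where "tm f = snd (tfact C E M f)" for f
  define Fa where "Fa f = Comp D (Ha (tm f)) (Ga (te f))" for f
  have T: "\<And>f. f \<in> Arr C \<Longrightarrow> te f \<in> E \<and> tm f \<in> M \<and> Cod C (te f) = Dom C (tm f) \<and> f = Comp C (tm f) (te f)"
    unfolding te_def tm_def using tfact_prop[OF sEM] by blast
  have T1: "\<And>f. f \<in> Arr C \<Longrightarrow> te f \<in> E \<and> tm f \<in> M \<and> Cod C (te f) = Dom C (tm f)"
    using T by blast
  have Tdef: "\<And>f. f \<in> Arr C \<Longrightarrow> Comp C (tm f) (te f) = f"
    using T by metis
  have Tdc: "\<And>f. f \<in> Arr C \<Longrightarrow> Dom C (te f) = Dom C f \<and> Cod C (tm f) = Cod C f"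
  proof -
    fix f assume f: "f \<in> Arr C"
    have "Comp C (tm f) (te f) \<in> Arr C \<and> Dom C (Comp C (tm f) (te f)) = Dom C (te f) \<and> Cod C (Comp C (tm f) (te f)) = Cod C (tm f)"
      using T1[OF f] EA MA by (intro cat_comp[OF C]) auto
    then show "Dom C (te f) = Dom C f \<and> Cod C (tm f) = Cod C f" unfolding Tdef[OF f] by simp
  qed
  have Fa_arr: "\<And>f. f \<in> Arr C \<Longrightarrow> Fa f \<in> Arr D \<and> Dom D (Fa f) = Go (Dom C f) \<and> Cod D (Fa f) = Go (Cod C f)"
  proof -
    fix f assume f: "f \<in> Arr C"
    have "Cod D (Ga (te f)) = Dom D (Ha (tm f))" using T1[OF f] G2 H2 by auto
    then show "?thesis f" unfolding Fa_def using cat_comp[OF D, of "Ga (te f)" "Ha (tm f)"] T1[OF f] G2 H2 Tdc[OF f] by auto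
  qed
  have FaE: "\<And>f. f \<in> E \<Longrightarrow> Fa f = Ga f"
  proof -
    fix f assume f: "f \<in> E"
    hence fA: "f \<in> Arr C" using EA by auto
    have co: "Cod C f \<in> Obj C" using cat_dc[OF C fA] by auto
    have "tfact C E M f = (f, Idt C (Cod C f))"
      using tfact_unique[OF sEM fA f Mid[OF co]] cat_id[OF C co] cat_idl[OF C fA] by auto
    hence "te f = f" "tm f = Idt C (Cod C f)" unfolding te_def tm_def by auto
    then show "Fa f = Ga f" unfolding Fa_def using H1[OF co] G2[OF f] cat_idl[OF D, of "Ga f"] by auto
  qed
  have FaM: "\<And>f. f \<in> M \<Longrightarrow> Fa f = Ha f"
  proof -
    fix f assume f: "f \<in> M"
    hence fA: "f \<in> Arr C" using MA by auto
    have co: "Dom C f \<in> Obj C" using cat_dc[OF C fA] by auto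
    have "tfact C E M f = (Idt C (Dom C f), f)"
      using tfact_unique[OF sEM fA Eid[OF co] f] cat_id[OF C co] cat_idr[OF C fA] by auto
    hence "te f = Idt C (Dom C f)" "tm f = f" unfolding te_def tm_def by auto
    then show "Fa f = Ha f" unfolding Fa_def using G1[OF co] H2[OF f] cat_idr[OF D, of "Ha f"] by auto
  qed
  have Facomp: "\<And>f g. f \<in> Arr C \<Longrightarrow> g \<in> Arr C \<Longrightarrow> Cod C f = Dom C g \<Longrightarrow> Fa (Comp C g f) = Comp D (Fa g) (Fa f)"
  proof -
    fix f g assume f: "f \<in> Arr C" and g: "g \<in> Arr C" and fg: "Cod C f = Dom C g"
    have feE: "te f \<in> E" and fmM: "tm f \<in> M" and cf: "Cod C (te f) = Dom C (tm f)" and fdef: "f = Comp C (tm f) (te f)"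
      using T1[OF f] Tdef[OF f] by auto
    have geE: "te g \<in> E" and gmM: "tm g \<in> M" and cg: "Cod C (te g) = Dom C (tm g)" and gdef: "g = Comp C (tm g) (te g)"
      using T1[OF g] Tdef[OF g] by auto
    have dcf: "Dom C (te f) = Dom C f" "Cod C (tm f) = Cod C f" using Tdc[OF f] by auto
    have dcg: "Dom C (te g) = Dom C g" "Cod C (tm g) = Cod C g" using Tdc[OF g] by auto
    have feA: "te f \<in> Arr C" and fmA: "tm f \<in> Arr C" and geA: "te g \<in> Arr C" and gmA: "tm g \<in> Arr C"
      using feE fmM geE gmM EA MA by auto
    have cfm: "Cod C (tm f) = Dom C (te g)" using dcf dcg fg by simp
    define h where "h = Comp C (te g) (tm f)"
    have hc: "h \<in> Arr C \<and> Dom C h = Dom C (tm f) \<and> Cod C h = Cod C (te g)"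
      unfolding h_def using cat_comp[OF C fmA geA cfm] .
    hence hA: "h \<in> Arr C" by auto
    have heE: "te h \<in> E" and hmM: "tm h \<in> M" and ch: "Cod C (te h) = Dom C (tm h)" and hdef: "h = Comp C (tm h) (te h)"
      using T1[OF hA] Tdef[OF hA] by auto
    have heA: "te h \<in> Arr C" and hmA: "tm h \<in> Arr C" using heE hmM EA MA by auto
    have hdc: "Dom C (te h) = Dom C (tm f)" "Cod C (tm h) = Cod C (te g)" using Tdc[OF hA] hc by auto
    have hdc2: "Dom C (te h) = Cod C (te f)" "Cod C (tm h) = Dom C (tm g)" using hdc cf cg by auto
    have sf: "sfact C E M h = (tm f, te g)"
      unfolding sfact_eq by (rule tfact_unique[OF sME hA fmM geE cfm h_def])
    have compat: "Comp D (Ha (tm h)) (Ga (te h)) = Comp D (Ga (te g)) (Ha (tm f))"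
      using bspec[OF assms(7) hA] sf unfolding te_def tm_def by simp
    have x1: "Comp C (tm f) (te f) \<in> Arr C" and x1c: "Cod C (Comp C (tm f) (te f)) = Cod C (tm f)"
      using cat_comp[OF C feA fmA cf] by auto
    have x3: "Comp C (te h) (te f) \<in> Arr C" and x3c: "Cod C (Comp C (te h) (te f)) = Cod C (te h)"
      and x3d: "Dom C (Comp C (te h) (te f)) = Dom C (te f)"
      using cat_comp[OF C feA heA hdc2(1)[symmetric]] by auto
    have x4: "Comp C (tm g) (tm h) \<in> Arr C" and x4d: "Dom C (Comp C (tm g) (tm h)) = Dom C (tm h)"
      using cat_comp[OF C hmA gmA hdc2(2)] by auto
    have eq: "Comp C g f = Comp C (Comp C (tm g) (tm h)) (Comp C (te h) (te f))"
    proof -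
      have "Comp C g f = Comp C (Comp C (tm g) (te g)) (Comp C (tm f) (te f))"
        by (rule arg_cong2[OF gdef fdef])
      also have "\<dots> = Comp C (tm g) (Comp C (te g) (Comp C (tm f) (te f)))"
        by (rule cat_assoc[OF C x1 geA gmA _ cg, symmetric]) (simp add: x1c cfm)
      also have "Comp C (te g) (Comp C (tm f) (te f)) = Comp C h (te f)"
        unfolding h_def by (rule cat_assoc[OF C feA fmA geA cf cfm])
      also have "h = Comp C (tm h) (te h)" by (rule hdef)
      also have "Comp C (Comp C (tm h) (te h)) (te f) = Comp C (tm h) (Comp C (te h) (te f))"
        by (rule cat_assoc[OF C feA heA hmA hdc2(1)[symmetric] ch, symmetric])
      also have "Comp C (tm g) (Comp C (tm h) (Comp C (te h) (te f))) = Comp C (Comp C (tm g) (tm h)) (Comp C (te h) (te f))"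
        by (rule cat_assoc[OF C x3 hmA gmA _ hdc2(2)]) (simp add: x3c ch)
      finally show ?thesis .
    qed
    have gfA: "Comp C g f \<in> Arr C" using cat_comp[OF C f g fg] by auto
    have e2: "Comp C (te h) (te f) \<in> E" using Ecomp[OF feE heE hdc2(1)[symmetric]] .
    have m2: "Comp C (tm g) (tm h) \<in> M" using Mcomp[OF hmM gmM hdc2(2)] .
    have cc: "Cod C (Comp C (te h) (te f)) = Dom C (Comp C (tm g) (tm h))"
      using x3c x4d ch by simp
    have tgf: "te (Comp C g f) = Comp C (te h) (te f)" "tm (Comp C g f) = Comp C (tm g) (tm h)"
      using tfact_unique[OF sEM gfA e2 m2 cc eq] unfolding te_def tm_def by auto
    have HtmA: "Ha (tm h) \<in> Arr D" and GteA: "Ga (te h) \<in> Arr D" and GfA: "Ga (te f) \<in> Arr D"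
      and HgA: "Ha (tm g) \<in> Arr D" and GgA: "Ga (te g) \<in> Arr D" and HfA: "Ha (tm f) \<in> Arr D"
      using G2 H2 heE hmM feE fmM geE gmM by auto
    have d1: "Cod D (Ga (te f)) = Dom D (Ga (te h))" using G2 feE heE hdc2 by auto
    have d2: "Cod D (Ga (te h)) = Dom D (Ha (tm h))" using G2 H2 heE hmM ch by auto
    have d3: "Cod D (Ha (tm h)) = Dom D (Ha (tm g))" using H2 hmM gmM hdc2 by auto
    have d4: "Cod D (Ha (tm f)) = Dom D (Ga (te g))" using H2 G2 fmM geE cfm by auto
    have d5: "Cod D (Ga (te f)) = Dom D (Ha (tm f))" using H2 G2 feE fmM cf by auto
    have d6: "Cod D (Ga (te g)) = Dom D (Ha (tm g))" using H2 G2 geE gmM cg by auto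
    have y1: "Comp D (Ga (te h)) (Ga (te f)) \<in> Arr D" "Cod D (Comp D (Ga (te h)) (Ga (te f))) = Cod D (Ga (te h))"
      using cat_comp[OF D GfA GteA d1] by auto
    have y2: "Comp D (Ha (tm f)) (Ga (te f)) \<in> Arr D" "Cod D (Comp D (Ha (tm f)) (Ga (te f))) = Cod D (Ha (tm f))"
      using cat_comp[OF D GfA HfA d5] by auto
    have "Fa (Comp C g f) = Comp D (Ha (Comp C (tm g) (tm h))) (Ga (Comp C (te h) (te f)))"
      unfolding Fa_def tgf ..
    also have "Ha (Comp C (tm g) (tm h)) = Comp D (Ha (tm g)) (Ha (tm h))" by (rule H3[OF hmM gmM hdc2(2)])
    also have "Ga (Comp C (te h) (te f)) = Comp D (Ga (te h)) (Ga (te f))" by (rule G3[OF feE heE hdc2(1)[symmetric]])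
    also have "Comp D (Comp D (Ha (tm g)) (Ha (tm h))) (Comp D (Ga (te h)) (Ga (te f)))
       = Comp D (Ha (tm g)) (Comp D (Ha (tm h)) (Comp D (Ga (te h)) (Ga (te f))))"
      by (rule cat_assoc[OF D y1(1) HtmA HgA _ d3, symmetric]) (simp add: y1 d2)
    also have "Comp D (Ha (tm h)) (Comp D (Ga (te h)) (Ga (te f))) = Comp D (Comp D (Ha (tm h)) (Ga (te h))) (Ga (te f))"
      by (rule cat_assoc[OF D GfA GteA HtmA d1 d2])
    also have "Comp D (Ha (tm h)) (Ga (te h)) = Comp D (Ga (te g)) (Ha (tm f))" by (rule compat)
    also have "Comp D (Comp D (Ga (te g)) (Ha (tm f))) (Ga (te f)) = Comp D (Ga (te g)) (Comp D (Ha (tm f)) (Ga (te f)))"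
      by (rule cat_assoc[OF D GfA HfA GgA d5 d4, symmetric])
    also have "Comp D (Ha (tm g)) (Comp D (Ga (te g)) (Comp D (Ha (tm f)) (Ga (te f))))
       = Comp D (Comp D (Ha (tm g)) (Ga (te g))) (Comp D (Ha (tm f)) (Ga (te f)))"
      by (rule cat_assoc[OF D y2(1) GgA HgA _ d6]) (simp add: y2 d4)
    also have "\<dots> = Comp D (Fa g) (Fa f)" unfolding Fa_def ..
    finally show "Fa (Comp C g f) = Comp D (Fa g) (Fa f)" .
  qed
  have func: "functor_on C (Arr C) D Go Fa"
    unfolding functor_on_def
  proof (intro conjI ballI impI)
    fix x assume x: "x \<in> Obj C"
    show "Go x \<in> Obj D" using G1[OF x] by auto
    show "Fa (Idt C x) = Idt D (Go x)" using FaE[OF Eid[OF x]] G1[OF x] by auto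
  qed (use Fa_arr Facomp in auto)
  have uniq: "\<And>Fo' Fa'. functor_on C (Arr C) D Fo' Fa' \<Longrightarrow> (\<forall>f\<in>E. Fa' f = Ga f) \<Longrightarrow> (\<forall>f\<in>M. Fa' f = Ha f)
     \<Longrightarrow> (\<forall>f\<in>Arr C. Fa' f = Fa f)"
  proof (intro ballI)
    fix Fo' Fa' f assume F: "functor_on C (Arr C) D Fo' Fa'" and e: "\<forall>f\<in>E. Fa' f = Ga f" and m: "\<forall>f\<in>M. Fa' f = Ha f"
      and f: "f \<in> Arr C"
    have "Fa' f = Fa' (Comp C (tm f) (te f))" using Tdef[OF f] by simp
    also have "\<dots> = Comp D (Fa' (tm f)) (Fa' (te f))"
    proof -
      have "\<forall>f\<in>Arr C. \<forall>g\<in>Arr C. Cod C f = Dom C g \<longrightarrow> Fa' (Comp C g f) = Comp D (Fa' g) (Fa' f)"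
        using F unfolding functor_on_def by blast
      moreover have "te f \<in> Arr C" "tm f \<in> Arr C" using T1[OF f] EA MA by auto
      ultimately show ?thesis using T1[OF f] by blast
    qed
    also have "\<dots> = Fa f" unfolding Fa_def using e m T1[OF f] by auto
    finally show "Fa' f = Fa f" .
  qed
  have ho: "\<forall>x\<in>Obj C. Go x = Ho x" using GoHo by simp
  have u2: "\<forall>Fo' Fa'. functor_on C (Arr C) D Fo' Fa'
                 \<and> (\<forall>x\<in>Obj C. Fo' x = Go x) \<and> (\<forall>f\<in>E. Fa' f = Ga f)
                 \<and> (\<forall>x\<in>Obj C. Fo' x = Ho x) \<and> (\<forall>f\<in>M. Fa' f = Ha f)
                 \<longrightarrow> (\<forall>x\<in>Obj C. Fo' x = Go x) \<and> (\<forall>f\<in>Arr C. Fa' f = Fa f)"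
  proof (intro allI impI)
    fix Fo' Fa' assume a: "functor_on C (Arr C) D Fo' Fa'
                 \<and> (\<forall>x\<in>Obj C. Fo' x = Go x) \<and> (\<forall>f\<in>E. Fa' f = Ga f)
                 \<and> (\<forall>x\<in>Obj C. Fo' x = Ho x) \<and> (\<forall>f\<in>M. Fa' f = Ha f)"
    then have "\<forall>f\<in>Arr C. Fa' f = Fa f" using uniq[of Fo' Fa'] by blast
    with a show "(\<forall>x\<in>Obj C. Fo' x = Go x) \<and> (\<forall>f\<in>Arr C. Fa' f = Fa f)" by blast
  qed
  have "functor_on C (Arr C) D Go Fa
            \<and> (\<forall>x\<in>Obj C. Go x = Go x) \<and> (\<forall>f\<in>E. Fa f = Ga f)
            \<and> (\<forall>x\<in>Obj C. Go x = Ho x) \<and> (\<forall>f\<in>M. Fa f = Ha f)"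
    using func FaE FaM ho by blast
  with u2 show ?thesis by blast
qed

end
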